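(* Let $\mathcal{M}=(S,A,AP,L,I)$ be an interval Markov decision process and let $s,t\in S$ with $s\sim_{(\forall)} t$. Then for every PCTL state formula $\varphi$ we have $s\models_{(\forall)}\varphi$ if and only if $t\models_{(\forall)}\varphi$.
   Context: An interval MDP (IMDP) is a tuple $(S,A,AP,L,I)$ with $S$ a finite set of states, $A$ a finite set of actions, $AP$ a finite set of atomic propositions, $L:S\to 2^{AP}$ a labelling, and $I:S\times A\times S\to\mathbb{I}$ where $\mathbb{I}$ is a set of subintervals of $[0,1]$. For $s\in S,a\in A$, write $s\xrightarrow{a}\mu$ if $\mu$ is a probability distribution on $S$ with $\mu(s')\in I(s,a,s')$ for all $s'$; the set $\Gamma_{s,a}=\{\mu\mid s\xrightarrow{a}\mu\}$ is required to be non-empty. Paths are sequences of states; $\mathrm{last}(\omega)$ is the last state of a finite path. A scheduler is a function $\sigma$ from finite paths to distributions over $A$; a nature is a function $\pi$ mapping a finite path $\omega$ and action $a$ to an element of $\Gamma_{\mathrm{last}(\omega),a}$. $\Sigma,\Pi$ denote the sets of all schedulers and natures. For a state $s$, $\sigma$, $\pi$, $\Pr^{\sigma,\pi}_s$ is the unique probability measure on infinite paths (with the cylinder $\sigma$-algebra) such that the cylinder of the one-state path $s'$ has probability $1$ if $s'=s$ and $0$ otherwise, and $\Pr^{\sigma,\pi}_s[\mathrm{Cyl}(\omega s')]=\Pr^{\sigma,\pi}_s[\mathrm{Cyl}(\omega)]\cdot\sum_{a\in A}\sigma(\omega)(a)\,\pi(\omega,a)(s')$. PCTL: state formulas $\varphi::=\mathit{true}\mid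 x\mid\neg\varphi\mid\varphi_1\wedge\varphi_2\mid \mathsf{P}_{\bowtie p}(\psi)$ and path formulas $\psi::=\mathsf{X}\varphi\mid\varphi_1\mathsf{U}\varphi_2\mid\varphi_1\mathsf{U}^{\le k}\varphi_2$, with $x\in AP$, rational $p\in[0,1]$, $\bowtie\in\{\le,<,\ge,>\}$, $k\in\mathbb{N}$. The relation $\models_{(\forall)}$: $s\models x$ iff $x\in L(s)$; negation and conjunction as usual; $s\models_{(\forall)}\mathsf{P}_{\bowtie p}(\psi)$ iff for all $\sigma\in\Sigma$ and all $\pi\in\Pi$, $\Pr^{\sigma,\pi}_s[\{\omega\mid\omega\models_{(\forall)}\psi\}]\bowtie p$. For an infinite path $\omega=s_1s_2\cdots$: $\omega\models\mathsf{X}\varphi$ iff $s_2\models\varphi$; $\omega\models\varphi_1\mathsf{U}^{\le k}\varphi_2$ iff there is $i\le k$ with $s_i\models\varphi_2$ and $s_j\models\varphi_1$ for all $j<i$; $\omega\models\varphi_1\mathsf{U}\varphi_2$ iff $\omega\models\varphi_1\mathsf{U}^{\le k}\varphi_2$ for some $k\in\mathbb{N}$. Cooperative bisimulation: write $s\to\mu$ if $\mu$ lies in the convex hull of $\bigcup_{a\in A}\Gamma_{s,a}$. An equivalence relation $R\subseteq S\times S$ is a probabilistic $(\forall)$-bisimulation if for all $(s,t)\in R$: $L(s)=L(t)$, and for each $s\to\mu$ there is $t\to\nu$ with $\mu(C)=\nu(C)$ for every equivalence class $C$ of $R$. $s\sim_{(\forall)}t$ iff some probabilistic $(\forall)$-bisimulation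 contains $(s,t)$. *)

theory Defs
  imports "HOL-Probability.Probability"
begin

text \<open>States are the finite type 's (S = UNIV), actions the finite type 'a (A = UNIV),
  atomic propositions the type 'ap; L :: 's => 'ap set is the labelling and
  I :: 's => 'a => 's => real set the interval function.\<close>

definition is_IMDP :: "('s::finite \<Rightarrow> 'a::finite \<Rightarrow> 's \<Rightarrow> real set) \<Rightarrow> bool" where
  "is_IMDP I \<longleftrightarrow>
     (\<forall>s a s'. is_interval (I s a s') \<and> I s a s' \<subseteq> {0..1}) \<and>
     (\<forall>s a. \<exists>\<mu>::'s pmf. \<forall>s'. pmf \<mu> s' \<in> I s a s')"

definition Gamma :: "('s \<Rightarrow> 'a \<Rightarrow> 's \<Rightarrow> real set) \<Rightarrow> 's \<Rightarrow> 'a \<Rightarrow> 's pmf set" where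
  "Gamma I s a = {\<mu>. \<forall>s'. pmf \<mu> s' \<in> I s a s'}"

text \<open>Finite paths are nonempty lists, infinite paths are streams.\<close>

type_synonym ('s,'a) scheduler = "'s list \<Rightarrow> 'a pmf"
type_synonym ('s,'a) nature = "'s list \<Rightarrow> 'a \<Rightarrow> 's pmf"

definition natures :: "('s \<Rightarrow> 'a \<Rightarrow> 's \<Rightarrow> real set) \<Rightarrow> ('s,'a) nature set" where
  "natures I = {\<pi>. \<forall>\<omega> a. \<omega> \<noteq> [] \<longrightarrow> \<pi> \<omega> a \<in> Gamma I (last \<omega>) a}"

definition Cyl :: "'s list \<Rightarrow> 's stream set" where
  "Cyl \<omega> = {x. stake (length \<omega>) x = \<omega>}"

definition path_measure_spec ::
  "'s::finite \<Rightarrow> ('s,'a::finite) scheduler \<Rightarrow> ('s,'a) nature \<Rightarrow> 's stream measure \<Rightarrow> bool" where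
  "path_measure_spec s \<sigma> \<pi> M \<longleftrightarrow>
     sets M = sets (stream_space (count_space UNIV)) \<and> prob_space M \<and>
     (\<forall>s'. measure M (Cyl [s']) = (if s' = s then 1 else 0)) \<and>
     (\<forall>\<omega> s'. \<omega> \<noteq> [] \<longrightarrow>
        measure M (Cyl (\<omega> @ [s'])) =
          measure M (Cyl \<omega>) * (\<Sum>a\<in>UNIV. pmf (\<sigma> \<omega>) a * pmf (\<pi> \<omega> a) s'))"

definition Pr :: "'s::finite \<Rightarrow> ('s,'a::finite) scheduler \<Rightarrow> ('s,'a) nature \<Rightarrow> 's stream measure" where
  "Pr s \<sigma> \<pi> = (THE M. path_measure_spec s \<sigma> \<pi> M)"

datatype cmp = LeC | LtC | GeC | GtC

fun cmp_holds :: "cmp \<Rightarrow> real \<Rightarrow> real \<Rightarrow> bool" where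
  "cmp_holds LeC x p = (x \<le> p)"
| "cmp_holds LtC x p = (x < p)"
| "cmp_holds GeC x p = (x \<ge> p)"
| "cmp_holds GtC x p = (x > p)"

datatype 'ap state_formula =
    TT
  | Atom 'ap
  | Neg "'ap state_formula"
  | And "'ap state_formula" "'ap state_formula"
  | Prob cmp rat "'ap path_formula"
and 'ap path_formula =
    Next "'ap state_formula"
  | Until "'ap state_formula" "'ap state_formula"
  | BUntil "'ap state_formula" nat "'ap state_formula"

primrec wf_state :: "'ap state_formula \<Rightarrow> bool"
  and wf_path :: "'ap path_formula \<Rightarrow> bool" where
  "wf_state TT = True"
| "wf_state (Atom x) = True"
| "wf_state (Neg f) = wf_state f"
| "wf_state (And f g) = (wf_state f \<and> wf_state g)"
| "wf_state (Prob c p \<psi>) = (0 \<le> p \<and> p \<le> 1 \<and> wf_path \<psi>)"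
| "wf_path (Next f) = wf_state f"
| "wf_path (Until f g) = (wf_state f \<and> wf_state g)"
| "wf_path (BUntil f k g) = (wf_state f \<and> wf_state g)"

text \<open>Satisfaction |=_(forall). Streams are 0-indexed: snth w j is s_{j+1} of the paper,
  so "i <= k with i >= 1" becomes "j < k".\<close>
primrec sat_state :: "('s::finite \<Rightarrow> 'a::finite \<Rightarrow> 's \<Rightarrow> real set) \<Rightarrow> ('s \<Rightarrow> 'ap set)
      \<Rightarrow> 's \<Rightarrow> 'ap state_formula \<Rightarrow> bool"
  and sat_path :: "('s::finite \<Rightarrow> 'a::finite \<Rightarrow> 's \<Rightarrow> real set) \<Rightarrow> ('s \<Rightarrow> 'ap set)
      \<Rightarrow> 's stream \<Rightarrow> 'ap path_formula \<Rightarrow> bool" where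
  "sat_state I L s TT = True"
| "sat_state I L s (Atom x) = (x \<in> L s)"
| "sat_state I L s (Neg f) = (\<not> sat_state I L s f)"
| "sat_state I L s (And f g) = (sat_state I L s f \<and> sat_state I L s g)"
| "sat_state I L s (Prob c p \<psi>) =
     (\<forall>\<sigma> :: ('s,'a) scheduler. \<forall>\<pi> \<in> natures I.
        cmp_holds c (measure (Pr s \<sigma> \<pi>) {w. sat_path I L w \<psi>}) (of_rat p))"
| "sat_path I L w (Next f) = sat_state I L (w !! 1) f"
| "sat_path I L w (Until f g) =
     (\<exists>j. sat_state I L (w !! j) g \<and> (\<forall>i<j. sat_state I L (w !! i) f))"
| "sat_path I L w (BUntil f k g) =
     (\<exists>j<k. sat_state I L (w !! j) g \<and> (\<forall>i<j. sat_state I L (w !! i) f))"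

definition pmf_vec :: "'s::finite pmf \<Rightarrow> real ^ 's" where
  "pmf_vec \<mu> = (\<chi> x. pmf \<mu> x)"

definition coop_step :: "('s::finite \<Rightarrow> 'a::finite \<Rightarrow> 's \<Rightarrow> real set) \<Rightarrow> 's \<Rightarrow> 's pmf \<Rightarrow> bool" where
  "coop_step I s \<mu> \<longleftrightarrow> pmf_vec \<mu> \<in> convex hull (\<Union>a. pmf_vec ` Gamma I s a)"

definition forall_bisimulation ::
  "('s::finite \<Rightarrow> 'a::finite \<Rightarrow> 's \<Rightarrow> real set) \<Rightarrow> ('s \<Rightarrow> 'ap set) \<Rightarrow> 's rel \<Rightarrow> bool" where
  "forall_bisimulation I L R \<longleftrightarrow> equiv UNIV R \<and>
     (\<forall>(s,t)\<in>R. L s = L t \<and>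
        (\<forall>\<mu>. coop_step I s \<mu> \<longrightarrow>
           (\<exists>\<nu>. coop_step I t \<nu> \<and>
              (\<forall>C\<in>UNIV // R. measure_pmf.prob \<mu> C = measure_pmf.prob \<nu> C))))"

definition forall_bisimilar ::
  "('s::finite \<Rightarrow> 'a::finite \<Rightarrow> 's \<Rightarrow> real set) \<Rightarrow> ('s \<Rightarrow> 'ap set) \<Rightarrow> 's \<Rightarrow> 's \<Rightarrow> bool" where
  "forall_bisimilar I L s t \<longleftrightarrow> (\<exists>R. forall_bisimulation I L R \<and> (s,t) \<in> R)"

end

theory Submission
  imports Defs
begin


definition PP :: "'s \<Rightarrow> ('s list \<Rightarrow> 's pmf) \<Rightarrow> 's list \<Rightarrow> real" where
  "PP s st \<omega> = (if \<omega> = [] then 1 else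
     of_bool (hd \<omega> = s) * (\<Prod>k\<in>{1..<length \<omega>}. pmf (st (take k \<omega>)) (\<omega> ! k)))"

lemma PP_single[simp]: "PP s st [x] = of_bool (x = s)"
  by (simp add: PP_def)

lemma PP_snoc: "\<omega> \<noteq> [] \<Longrightarrow> PP s st (\<omega> @ [x]) = PP s st \<omega> * pmf (st \<omega>) x"
proof -
  assume ne: "\<omega> \<noteq> []"
  let ?n = "length \<omega>"
  have "{1..<length (\<omega>@[x])} = insert ?n {1..<?n}" using ne by (cases \<omega>) auto
  then have "(\<Prod>k\<in>{1..<length (\<omega>@[x])}. pmf (st (take k (\<omega>@[x]))) ((\<omega>@[x]) ! k))
     = pmf (st \<omega>) x * (\<Prod>k\<in>{1..<?n}. pmf (st (take k (\<omega>@[x]))) ((\<omega>@[x]) ! k))"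
    by simp
  also have "(\<Prod>k\<in>{1..<?n}. pmf (st (take k (\<omega>@[x]))) ((\<omega>@[x]) ! k))
     = (\<Prod>k\<in>{1..<?n}. pmf (st (take k \<omega>)) (\<omega> ! k))"
    by (intro prod.cong) (auto simp: nth_append)
  finally show ?thesis using ne by (simp add: PP_def)
qed

lemma PP_nonneg: "PP s st \<omega> \<ge> 0"
  by (simp add: PP_def prod_nonneg)

lemma Cyl_sstart: "Cyl \<omega> = sstart UNIV \<omega>"
proof (induction \<omega>)
  case Nil then show ?case by (simp add: Cyl_def)
next
  case (Cons a \<omega>)
  have "x \<in> Cyl (a # \<omega>) \<longleftrightarrow> x \<in> sstart UNIV (a # \<omega>)" for x
    using Cons by (cases x) (auto simp: Cyl_def)
  then show ?case by blast
qed

lemma Cyl_sets[measurable]: "Cyl \<omega> \<in> sets (stream_space (count_space UNIV))"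
  by (simp add: Cyl_sstart sstart_sets)

primrec hist :: "'s \<Rightarrow> ('s list \<Rightarrow> 's) \<Rightarrow> nat \<Rightarrow> 's list" where
  "hist s x 0 = [s]"
| "hist s x (Suc n) = hist s x n @ [x (hist s x n)]"

lemma length_hist[simp]: "length (hist s x n) = Suc n"
  by (induction n) auto

lemma hist_ne[simp]: "hist s x n \<noteq> []"
  by (cases n) auto

definition path :: "'s \<Rightarrow> ('s list \<Rightarrow> 's) \<Rightarrow> 's stream" where
  "path s x = to_stream (\<lambda>n. last (hist s x n))"

lemma stake_path: "stake (Suc n) (path s x) = hist s x n"
proof (induction n)
  case 0 then show ?case by (simp add: path_def to_stream_def)
next
  case (Suc n)
  have "stake (Suc (Suc n)) (path s x) = stake (Suc n) (path s x) @ [path s x !! Suc n]"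
    by (rule stake_Suc)
  also have "\<dots> = hist s x (Suc n)" using Suc by (simp add: path_def to_stream_def)
  finally show ?case .
qed

lemma hist_eq_iff:
  "length \<omega> = Suc n \<Longrightarrow> hist s x n = \<omega> \<longleftrightarrow> hd \<omega> = s \<and> (\<forall>k\<in>{1..n}. x (take k \<omega>) = \<omega> ! k)"
proof (induction n arbitrary: \<omega>)
  case 0
  then obtain a where "\<omega> = [a]" by (cases \<omega>) auto
  then show ?case by auto
next
  case (Suc n)
  then obtain \<omega>' y where w: "\<omega> = \<omega>' @ [y]" by (cases \<omega> rule: rev_cases) auto
  with Suc.prems have len: "length \<omega>' = Suc n" by simp
  then have ne: "\<omega>' \<noteq> []" by auto
  have "hist s x (Suc n) = \<omega> \<longleftrightarrow> hist s x n = \<omega>' \<and> x \<omega>' = y"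
    using w by auto
  also have "\<dots> \<longleftrightarrow> hd \<omega>' = s \<and> (\<forall>k\<in>{1..n}. x (take k \<omega>') = \<omega>' ! k) \<and> x \<omega>' = y"
    using Suc.IH[OF len] by auto
  also have "\<dots> \<longleftrightarrow> hd \<omega> = s \<and> (\<forall>k\<in>{1..Suc n}. x (take k \<omega>) = \<omega> ! k)"
  proof -
    have "hd \<omega> = hd \<omega>'" using w ne by simp
    moreover have "(\<forall>k\<in>{1..Suc n}. x (take k \<omega>) = \<omega> ! k) \<longleftrightarrow>
        (\<forall>k\<in>{1..n}. x (take k \<omega>') = \<omega>' ! k) \<and> x \<omega>' = y"
    proof -
      have "{1..Suc n} = insert (Suc n) {1..n}" by auto
      moreover have "\<forall>k\<in>{1..n}. take k \<omega> = take k \<omega>' \<and> \<omega> ! k = \<omega>' ! k"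
        using w len by (auto simp: nth_append)
      moreover have "take (Suc n) \<omega> = \<omega>'" "\<omega> ! Suc n = y" using w len by (auto simp: nth_append)
      ultimately show ?thesis by auto
    qed
    ultimately show ?thesis by simp
  qed
  finally show ?case .
qed

lemma exists_path_measure:
  fixes st :: "'s::finite list \<Rightarrow> 's pmf"
  shows "\<exists>M. sets M = sets (stream_space (count_space UNIV)) \<and> prob_space M \<and>
     (\<forall>\<omega>. \<omega> \<noteq> [] \<longrightarrow> measure M (Cyl \<omega>) = PP s st \<omega>)"
proof -
  define M0 where "M0 = PiM UNIV (\<lambda>h. measure_pmf (st h))"
  interpret P: product_prob_space "\<lambda>h. measure_pmf (st h)" UNIV
    by (rule product_prob_spaceI) (rule prob_space_measure_pmf)
  have hist_meas: "(\<lambda>x. hist s x n) \<in> measurable M0 (count_space UNIV)" for n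
  proof (induction n)
    case 0 show ?case by simp
  next
    case (Suc n)
    have "(\<lambda>x. (\<lambda>h x. h @ [x h]) (hist s x n) x) \<in> measurable M0 (count_space UNIV)"
    proof (rule measurable_compose_countable'[OF _ Suc])
      fix h :: "'s list"
      have "(\<lambda>x. x h) \<in> measurable M0 (measure_pmf (st h))"
        unfolding M0_def by (rule measurable_component_singleton) simp
      then have "(\<lambda>x. x h) \<in> measurable M0 (count_space UNIV)"
        using measurable_cong_sets[OF refl sets_measure_pmf_count_space] by blast
      from measurable_compose[OF this measurable_count_space[of "\<lambda>y. h @ [y]"]]
      show "(\<lambda>x. h @ [x h]) \<in> measurable M0 (count_space UNIV)" by simp
    qed auto
    then show ?case by simp
  qed
  have path_meas: "path s \<in> measurable M0 (stream_space (count_space UNIV))"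
  proof (rule measurable_stream_space2)
    fix n
    have "(\<lambda>x. last (hist s x n)) \<in> measurable M0 (count_space UNIV)"
      using measurable_compose[OF hist_meas measurable_count_space[of last]] by simp
    then show "(\<lambda>x. path s x !! n) \<in> measurable M0 (count_space UNIV)"
      by (simp add: path_def to_stream_def)
  qed
  have probM0: "prob_space M0" unfolding M0_def by (rule P.prob_space_axioms)
  define M where "M = distr M0 (stream_space (count_space UNIV)) (path s)"
  show ?thesis
  proof (intro exI conjI allI impI)
    show "sets M = sets (stream_space (count_space UNIV))" by (simp add: M_def)
    show "prob_space M" unfolding M_def by (rule prob_space.prob_space_distr[OF probM0 path_meas])
    fix \<omega> :: "'s list" assume ne: "\<omega> \<noteq> []"
    then obtain n where len: "length \<omega> = Suc n" by (cases \<omega>) auto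
    have "measure M (Cyl \<omega>) = measure M0 (path s -` Cyl \<omega> \<inter> space M0)"
      by (simp add: M_def measure_distr[OF path_meas])
    also have "path s -` Cyl \<omega> \<inter> space M0 = {x\<in>space M0. hist s x n = \<omega>}"
      using stake_path[of n s] len by (auto simp: Cyl_def)
    finally have eq1: "measure M (Cyl \<omega>) = measure M0 {x\<in>space M0. hist s x n = \<omega>}" .
    show "measure M (Cyl \<omega>) = PP s st \<omega>"
    proof (cases "hd \<omega> = s")
      case False
      then have "{x\<in>space M0. hist s x n = \<omega>} = {}" using hist_eq_iff[OF len] by auto
      then show ?thesis using eq1 False ne by (simp only: PP_def) simp
    next
      case True
      define J where "J = (\<lambda>k. take k \<omega>) ` {1..n}"
      have injJ: "inj_on (\<lambda>k. take k \<omega>) {1..n}"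
        by (rule inj_onI) (metis atLeastAtMost_iff le_SucI len length_take min.absorb2)
      have "{x\<in>space M0. hist s x n = \<omega>} = {x\<in>space M0. \<forall>i\<in>J. x i \<in> {\<omega> ! length i}}"
        using hist_eq_iff[OF len] True len by (auto simp: J_def)
      then have "emeasure M0 {x\<in>space M0. hist s x n = \<omega>} = (\<Prod>i\<in>J. emeasure (measure_pmf (st i)) {\<omega> ! length i})"
        unfolding M0_def by (simp only:) (rule P.emeasure_PiM_Collect, auto simp: J_def)
      also have "\<dots> = (\<Prod>k\<in>{1..n}. emeasure (measure_pmf (st (take k \<omega>))) {\<omega> ! length (take k \<omega>)})"
        unfolding J_def by (rule prod.reindex[OF injJ, unfolded comp_def])
      also have "\<dots> = (\<Prod>k\<in>{1..n}. ennreal (pmf (st (take k \<omega>)) (\<omega> ! k)))"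
        using len by (intro prod.cong) (auto simp: emeasure_pmf_single)
      also have "\<dots> = ennreal (\<Prod>k\<in>{1..n}. pmf (st (take k \<omega>)) (\<omega> ! k))"
        by (rule prod_ennreal) simp
      finally have "measure M0 {x\<in>space M0. hist s x n = \<omega>} = (\<Prod>k\<in>{1..n}. pmf (st (take k \<omega>)) (\<omega> ! k))"
        using P.emeasure_eq_measure unfolding M0_def by (simp add: prod_nonneg)
      moreover have "{1..<length \<omega>} = {1..n}" using len by auto
      ultimately show ?thesis using eq1 True ne by (simp add: PP_def)
    qed
  qed
qed

definition stp :: "('s,'a) scheduler \<Rightarrow> ('s,'a) nature \<Rightarrow> 's list \<Rightarrow> 's pmf" where
  "stp \<sigma> \<pi> \<omega> = bind_pmf (\<sigma> \<omega>) (\<pi> \<omega>)"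

lemma pmf_stp: "pmf (stp \<sigma> \<pi> \<omega>) x = (\<Sum>a\<in>UNIV. pmf (\<sigma> \<omega>) a * pmf (\<pi> \<omega> a) x)"
  for \<sigma> :: "('s, 'a::finite) scheduler"
  unfolding stp_def pmf_bind by (subst integral_measure_pmf[of UNIV]) auto

lemma spec_PP:
  assumes "path_measure_spec s \<sigma> \<pi> M" "\<omega> \<noteq> []"
  shows "measure M (Cyl \<omega>) = PP s (stp \<sigma> \<pi>) \<omega>"
  using assms(2)
proof (induction \<omega> rule: rev_induct)
  case Nil then show ?case by simp
next
  case (snoc x xs)
  show ?case
  proof (cases "xs = []")
    case True then show ?thesis using assms(1) by (simp add: path_measure_spec_def)
  next
    case False
    then show ?thesis using snoc assms(1)
      by (simp add: path_measure_spec_def PP_snoc pmf_stp)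
  qed
qed

lemma Pr_spec:
  fixes s :: "'s::finite" and \<sigma> :: "('s,'a::finite) scheduler" and \<pi> :: "('s,'a) nature"
  shows "path_measure_spec s \<sigma> \<pi> (Pr s \<sigma> \<pi>)"
proof -
  obtain M where M: "sets M = sets (stream_space (count_space UNIV))" "prob_space M"
     "\<And>\<omega>. \<omega> \<noteq> [] \<Longrightarrow> measure M (Cyl \<omega>) = PP s (stp \<sigma> \<pi>) \<omega>"
    using exists_path_measure[of s "stp \<sigma> \<pi>"] by blast
  have specM: "path_measure_spec s \<sigma> \<pi> M"
    unfolding path_measure_spec_def
  proof (intro conjI allI impI)
    fix s' :: 's show "measure M (Cyl [s']) = (if s' = s then 1 else 0)" using M(3)[of "[s']"] by simp
  next
    fix \<omega> :: "'s list" and s' :: 's assume "\<omega> \<noteq> []"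
    then show "measure M (Cyl (\<omega> @ [s'])) = measure M (Cyl \<omega>) * (\<Sum>a\<in>UNIV. pmf (\<sigma> \<omega>) a * pmf (\<pi> \<omega> a) s')"
      using M(3)[of \<omega>] M(3)[of "\<omega> @ [s']"] by (simp add: PP_snoc pmf_stp)
  next
    show "sets M = sets (stream_space (count_space UNIV))" by (rule M(1))
  next
    show "prob_space M" by (rule M(2))
  qed
  have uniq: "N = M" if "path_measure_spec s \<sigma> \<pi> N" for N
  proof (rule stream_space_eq_sstart[of UNIV])
    show "prob_space N" "sets N = sets (stream_space (count_space UNIV))"
      using that by (auto simp: path_measure_spec_def)
    fix xs :: "'s list" assume "xs \<noteq> []"
    then have eqm: "measure N (sstart UNIV xs) = measure M (sstart UNIV xs)"
      using spec_PP[OF that] spec_PP[OF specM] by (simp add: Cyl_sstart)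
    interpret N: prob_space N using that by (simp add: path_measure_spec_def)
    interpret MM: prob_space M by (rule M(2))
    show "emeasure N (sstart UNIV xs) = emeasure M (sstart UNIV xs)"
      using eqm by (simp add: N.emeasure_eq_measure MM.emeasure_eq_measure)
  qed (simp_all add: M)
  show ?thesis unfolding Pr_def
    by (rule theI[of _ M]) (rule specM, rule uniq)
qed

lemma Pr_Cyl: "\<omega> \<noteq> [] \<Longrightarrow> measure (Pr s \<sigma> \<pi>) (Cyl \<omega>) = PP s (stp \<sigma> \<pi>) \<omega>"
  by (rule spec_PP[OF Pr_spec])




lemma pmf_vec_nth[simp]: "pmf_vec \<mu> $ x = pmf \<mu> x"
  by (simp add: pmf_vec_def)

lemma pmf_vec_sum: "sum (\<lambda>x. pmf_vec \<mu> $ x) UNIV = 1"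
  for \<mu> :: "'s::finite pmf"
  by (simp add: sum_pmf_eq_1)

lemma pmf_vec_inj: "pmf_vec \<mu> = pmf_vec \<nu> \<Longrightarrow> \<mu> = \<nu>"
  by (rule pmf_eqI) (metis pmf_vec_nth)

lemma pmf_vec_surj:
  fixes v :: "real ^ 's::finite"
  assumes "\<And>x. v $ x \<ge> 0" "sum (\<lambda>x. v $ x) UNIV = 1"
  shows "\<exists>\<mu>. pmf_vec \<mu> = v"
proof -
  have int: "(\<integral>\<^sup>+x. ennreal (v $ x) \<partial>count_space UNIV) = 1"
    using assms by (simp add: nn_integral_count_space_finite sum_ennreal)
  show ?thesis
    by (rule exI[of _ "embed_pmf (\<lambda>x. v $ x)"])
       (simp add: vec_eq_iff pmf_embed_pmf[OF assms(1) int])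
qed

lemma range_pmf_vec: "range pmf_vec = {v :: real ^ 's::finite. (\<forall>x. v $ x \<ge> 0) \<and> sum (\<lambda>x. v $ x) UNIV = 1}"
  using pmf_vec_surj pmf_vec_sum by fastforce

lemma convex_range_pmf_vec: "convex (range (pmf_vec :: 's::finite pmf \<Rightarrow> _))"
  unfolding range_pmf_vec convex_def
  by (auto simp: sum.distrib sum_distrib_left[symmetric])

lemma convex_Gamma:
  fixes I :: "'s::finite \<Rightarrow> 'a::finite \<Rightarrow> 's \<Rightarrow> real set"
  assumes "is_IMDP I"
  shows "convex (pmf_vec ` Gamma I x a)"
proof (rule convexI)
  fix u v :: "real ^ 's" and t1 t2 :: real
  assume u: "u \<in> pmf_vec ` Gamma I x a" and v: "v \<in> pmf_vec ` Gamma I x a"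
    and t: "0 \<le> t1" "0 \<le> t2" "t1 + t2 = 1"
  obtain \<mu> where \<mu>: "\<mu> \<in> Gamma I x a" "u = pmf_vec \<mu>" using u by blast
  obtain \<nu> where \<nu>: "\<nu> \<in> Gamma I x a" "v = pmf_vec \<nu>" using v by blast
  have "t1 *\<^sub>R u + t2 *\<^sub>R v \<in> range pmf_vec"
    using convex_range_pmf_vec t \<mu> \<nu> unfolding convex_def by blast
  then obtain \<rho> where \<rho>: "t1 *\<^sub>R u + t2 *\<^sub>R v = pmf_vec \<rho>" by auto
  have "pmf \<rho> y \<in> I x a y" for y
  proof -
    have "convex (I x a y)" using assms by (simp add: is_IMDP_def is_interval_convex)
    moreover have "pmf \<mu> y \<in> I x a y" "pmf \<nu> y \<in> I x a y" using \<mu> \<nu> by (auto simp: Gamma_def)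
    ultimately have "t1 * pmf \<mu> y + t2 * pmf \<nu> y \<in> I x a y"
      using t unfolding convex_def by auto
    moreover have "pmf \<rho> y = t1 * pmf \<mu> y + t2 * pmf \<nu> y"
      using arg_cong[OF \<rho>, of "\<lambda>w. w $ y"] \<mu> \<nu> by simp
    ultimately show ?thesis by simp
  qed
  then show "t1 *\<^sub>R u + t2 *\<^sub>R v \<in> pmf_vec ` Gamma I x a"
    using \<rho> by (auto simp: Gamma_def)
qed

lemma Gamma_ne: "is_IMDP I \<Longrightarrow> Gamma I x a \<noteq> {}"
  by (auto simp: is_IMDP_def Gamma_def)

lemma coop_hull:
  fixes I :: "'s::finite \<Rightarrow> 'a::finite \<Rightarrow> 's \<Rightarrow> real set"
  assumes "is_IMDP I"
  shows "convex hull (\<Union>a. pmf_vec ` Gamma I x a) =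
    {\<Sum>a\<in>UNIV. c a *\<^sub>R s a | c s. (\<forall>a\<in>UNIV. c a \<ge> 0) \<and> sum c UNIV = 1 \<and> (\<forall>a\<in>UNIV. s a \<in> pmf_vec ` Gamma I x a)}"
  by (rule convex_hull_finite_union) (use convex_Gamma[OF assms] Gamma_ne[OF assms] in auto)

lemma pmf_vec_bind: "pmf_vec (bind_pmf l \<mu>) = (\<Sum>a\<in>UNIV. pmf l a *\<^sub>R pmf_vec (\<mu> a))"
  for l :: "'a::finite pmf" and \<mu> :: "'a \<Rightarrow> 's::finite pmf"
  by (simp add: vec_eq_iff pmf_bind integral_measure_pmf[of UNIV])

lemma coop_bind:
  fixes I :: "'s::finite \<Rightarrow> 'a::finite \<Rightarrow> 's \<Rightarrow> real set"
  assumes "is_IMDP I" "\<And>a. \<mu> a \<in> Gamma I x a"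
  shows "coop_step I x (bind_pmf l \<mu>)"
  unfolding coop_step_def coop_hull[OF assms(1)] pmf_vec_bind
  using assms(2) by (auto intro!: exI[of _ "pmf l"] simp: sum_pmf_eq_1)

lemma coop_decomp:
  fixes I :: "'s::finite \<Rightarrow> 'a::finite \<Rightarrow> 's \<Rightarrow> real set"
  assumes "is_IMDP I" "coop_step I x \<nu>"
  shows "\<exists>l \<mu>. (\<forall>a. \<mu> a \<in> Gamma I x a) \<and> \<nu> = bind_pmf l \<mu>"
proof -
  obtain c s where cs: "pmf_vec \<nu> = (\<Sum>a\<in>UNIV. c a *\<^sub>R s a)" "\<forall>a. c a \<ge> 0" "sum c UNIV = 1"
     "\<forall>a. s a \<in> pmf_vec ` Gamma I x a"
    using assms(2) unfolding coop_step_def coop_hull[OF assms(1)] by auto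
  have "\<forall>a. \<exists>m. m \<in> Gamma I x a \<and> s a = pmf_vec m" using cs(4) by auto
  then obtain \<mu> where \<mu>: "\<And>a. \<mu> a \<in> Gamma I x a \<and> s a = pmf_vec (\<mu> a)"
    using choice[of "\<lambda>a m. m \<in> Gamma I x a \<and> s a = pmf_vec m"] by blast
  obtain l :: "'a pmf" where l: "pmf_vec l = (\<chi> a. c a)"
    using pmf_vec_surj[of "\<chi> a. c a"] cs by auto
  have "pmf_vec \<nu> = pmf_vec (bind_pmf l \<mu>)"
    unfolding pmf_vec_bind cs(1) using \<mu> l
    by (simp add: vec_eq_iff)
  then show ?thesis using \<mu> pmf_vec_inj by blast
qed




definition cp :: "('s \<Rightarrow> 's) \<Rightarrow> 's pmf \<Rightarrow> 's \<Rightarrow> real" where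
  "cp cls \<nu> z = measure_pmf.prob \<nu> {x. cls x = z}"

definition W :: "('s \<Rightarrow> 's) \<Rightarrow> 's list \<Rightarrow> 's list set" where
  "W cls c = {\<omega>. length \<omega> = length c \<and> map cls \<omega> = c}"

definition Q :: "('s \<Rightarrow> 's) \<Rightarrow> 's \<Rightarrow> ('s list \<Rightarrow> 's pmf) \<Rightarrow> 's list \<Rightarrow> real" where
  "Q cls s st c = (\<Sum>\<omega>\<in>W cls c. PP s st \<omega>)"

lemma finite_W[simp]: "finite (W cls (c :: 's::finite list))"
proof -
  have "W cls c \<subseteq> {\<omega>. set \<omega> \<subseteq> UNIV \<and> length \<omega> = length c}" by (auto simp: W_def)
  then show ?thesis using finite_lists_length_eq[of "UNIV :: 's set"] finite_subset by auto
qed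

lemma Q_nonneg: "Q cls s st c \<ge> 0"
  unfolding Q_def by (intro sum_nonneg PP_nonneg)

lemma cp_sum: "cp cls \<nu> z = (\<Sum>y\<in>{y. cls y = z}. pmf \<nu> y)"
  for \<nu> :: "'s::finite pmf"
  unfolding cp_def by (rule measure_measure_pmf_finite) simp

lemma Q_single: "Q cls s st [z] = of_bool (cls s = z)"
  for s :: "'s::finite"
proof -
  have "W cls [z] = (\<lambda>y. [y]) ` {y. cls y = z}"
    by (auto simp: W_def length_Suc_conv)
  then have "Q cls s st [z] = (\<Sum>y\<in>{y. cls y = z}. of_bool (y = s))"
    unfolding Q_def by (simp add: sum.reindex inj_on_def)
  also have "\<dots> = of_bool (cls s = z)"
    by (cases "cls s = z") (auto simp: sum.delta)
  finally show ?thesis .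
qed

lemma Q_snoc:
  fixes s :: "'s::finite"
  assumes "c \<noteq> []"
  shows "Q cls s st (c @ [z]) = (\<Sum>\<omega>\<in>W cls c. PP s st \<omega> * cp cls (st \<omega>) z)"
proof -
  have "W cls (c @ [z]) = (\<lambda>(\<omega>,y). \<omega> @ [y]) ` (W cls c \<times> {y. cls y = z})"
  proof (intro equalityI subsetI)
    fix w assume "w \<in> W cls (c @ [z])"
    then have w: "length w = Suc (length c)" "map cls w = c @ [z]" by (auto simp: W_def)
    then obtain w' y where "w = w' @ [y]" by (cases w rule: rev_cases) auto
    with w show "w \<in> (\<lambda>(\<omega>,y). \<omega> @ [y]) ` (W cls c \<times> {y. cls y = z})"
      by (auto simp: W_def image_iff)
  qed (auto simp: W_def)
  moreover have "inj_on (\<lambda>(\<omega>,y). \<omega> @ [y]) (W cls c \<times> {y. cls y = z})"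
    by (auto simp: inj_on_def)
  ultimately have "Q cls s st (c @ [z]) = (\<Sum>(\<omega>,y)\<in>W cls c \<times> {y. cls y = z}. PP s st (\<omega> @ [y]))"
    unfolding Q_def by (simp add: sum.reindex split_def)
  also have "\<dots> = (\<Sum>\<omega>\<in>W cls c. \<Sum>y\<in>{y. cls y = z}. PP s st (\<omega> @ [y]))"
    by (rule sum.cartesian_product[symmetric])
  also have "\<dots> = (\<Sum>\<omega>\<in>W cls c. PP s st \<omega> * cp cls (st \<omega>) z)"
  proof (rule sum.cong[OF refl])
    fix \<omega> assume "\<omega> \<in> W cls c"
    then have "\<omega> \<noteq> []" using assms by (auto simp: W_def)
    then show "(\<Sum>y\<in>{y. cls y = z}. PP s st (\<omega> @ [y])) = PP s st \<omega> * cp cls (st \<omega>) z"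
      by (simp add: PP_snoc cp_sum sum_distrib_left)
  qed
  finally show ?thesis .
qed

lemma bisim_match:
  fixes I :: "'s::finite \<Rightarrow> 'a::finite \<Rightarrow> 's \<Rightarrow> real set"
  assumes bis: "forall_bisimulation I L R" and cls: "\<And>x y. cls x = cls y \<longleftrightarrow> (x,y) \<in> R"
    and xy: "(x,y) \<in> R" and co: "coop_step I x \<mu>"
  shows "\<exists>\<nu>. coop_step I y \<nu> \<and> (\<forall>z. cp cls \<nu> z = cp cls \<mu> z)"
proof -
  obtain \<nu> where \<nu>: "coop_step I y \<nu>"
    "\<forall>C\<in>UNIV // R. measure_pmf.prob \<mu> C = measure_pmf.prob \<nu> C"
    using bis xy co unfolding forall_bisimulation_def by fast
  have "cp cls \<nu> z = cp cls \<mu> z" for z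
  proof (cases "\<exists>y'. cls y' = z")
    case True
    then obtain y' where y': "cls y' = z" by blast
    have "{x. cls x = z} = R `` {y'}" using y' by (auto simp: cls[symmetric])
    then have "{x. cls x = z} \<in> UNIV // R" by (simp add: quotientI)
    then show ?thesis using \<nu>(2) by (simp add: cp_def)
  next
    case False
    then have "{x. cls x = z} = {}" by auto
    then show ?thesis by (simp add: cp_def)
  qed
  then show ?thesis using \<nu>(1) by blast
qed

lemma mix_exists:
  fixes I :: "'s::finite \<Rightarrow> 'a::finite \<Rightarrow> 's \<Rightarrow> real set"
  assumes bis: "forall_bisimulation I L R" and cls: "\<And>x y. cls x = cls y \<longleftrightarrow> (x,y) \<in> R"
    and coop: "\<And>\<omega>. \<omega> \<noteq> [] \<Longrightarrow> coop_step I (last \<omega>) (st \<omega>)"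
    and h: "h \<noteq> []" and q: "Q cls s st (map cls h) > 0"
  shows "\<exists>\<nu>. coop_step I (last h) \<nu> \<and> (\<forall>z. cp cls \<nu> z =
     (\<Sum>\<omega>\<in>W cls (map cls h). PP s st \<omega> * cp cls (st \<omega>) z) / Q cls s st (map cls h))"
proof -
  define Wc where "Wc = W cls (map cls h)"
  define q where "q = Q cls s st (map cls h)"
  have qpos: "q > 0" using q by (simp add: q_def)
  have rel: "\<omega> \<noteq> [] \<and> (last \<omega>, last h) \<in> R" if "\<omega> \<in> Wc" for \<omega>
  proof -
    have len: "length \<omega> = length h" "map cls \<omega> = map cls h" using that by (auto simp: Wc_def W_def)
    then have ne: "\<omega> \<noteq> []" using h by auto
    have "cls (last \<omega>) = last (map cls \<omega>)" using ne by (simp add: last_map)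
    also have "\<dots> = cls (last h)" using len h by (simp add: last_map)
    finally show ?thesis using ne cls by blast
  qed
  have "\<forall>\<omega>. \<exists>\<nu>. \<omega> \<in> Wc \<longrightarrow> coop_step I (last h) \<nu> \<and> (\<forall>z. cp cls \<nu> z = cp cls (st \<omega>) z)"
    using bisim_match[OF bis cls] rel coop by blast
  then obtain \<nu>f where \<nu>f: "\<And>\<omega>. \<omega> \<in> Wc \<Longrightarrow> coop_step I (last h) (\<nu>f \<omega>) \<and> (\<forall>z. cp cls (\<nu>f \<omega>) z = cp cls (st \<omega>) z)"
    by metis
  define v where "v = (\<Sum>\<omega>\<in>Wc. (PP s st \<omega> / q) *\<^sub>R pmf_vec (\<nu>f \<omega>))"
  have wsum: "(\<Sum>\<omega>\<in>Wc. PP s st \<omega> / q) = 1"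
    using qpos by (simp add: sum_divide_distrib[symmetric] q_def Q_def Wc_def)
  have wnn: "PP s st \<omega> / q \<ge> 0" for \<omega> by (rule divide_nonneg_pos[OF PP_nonneg qpos])
  have vH: "v \<in> convex hull (\<Union>a. pmf_vec ` Gamma I (last h) a)"
    unfolding v_def
    by (rule convex_sum[OF _ convex_convex_hull wsum wnn])
       (use \<nu>f in \<open>auto simp: Wc_def coop_step_def\<close>)
  have "v \<in> range pmf_vec"
    unfolding v_def
    by (rule convex_sum[OF _ convex_range_pmf_vec wsum wnn]) (auto simp: Wc_def)
  then obtain \<nu> where \<nu>: "pmf_vec \<nu> = v" by auto
  have "cp cls \<nu> z = (\<Sum>\<omega>\<in>Wc. PP s st \<omega> * cp cls (st \<omega>) z) / q" for z
  proof -
    have "cp cls \<nu> z = (\<Sum>y\<in>{y. cls y = z}. v $ y)" using \<nu> by (simp add: cp_sum flip: \<nu>)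
    also have "\<dots> = (\<Sum>y\<in>{y. cls y = z}. \<Sum>\<omega>\<in>Wc. (PP s st \<omega> / q) * pmf (\<nu>f \<omega>) y)"
      by (simp add: v_def)
    also have "\<dots> = (\<Sum>\<omega>\<in>Wc. (PP s st \<omega> / q) * cp cls (\<nu>f \<omega>) z)"
      by (subst sum.swap) (simp add: cp_sum sum_distrib_left)
    also have "\<dots> = (\<Sum>\<omega>\<in>Wc. (PP s st \<omega> / q) * cp cls (st \<omega>) z)"
      using \<nu>f by (intro sum.cong) auto
    also have "\<dots> = (\<Sum>\<omega>\<in>Wc. PP s st \<omega> * cp cls (st \<omega>) z) / q"
      by (simp add: sum_divide_distrib)
    finally show ?thesis .
  qed
  moreover have "coop_step I (last h) \<nu>" using vH \<nu> by (simp add: coop_step_def)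
  ultimately show ?thesis unfolding Wc_def q_def by blast
qed

lemma coop_exists:
  fixes I :: "'s::finite \<Rightarrow> 'a::finite \<Rightarrow> 's \<Rightarrow> real set"
  assumes imdp: "is_IMDP I"
  shows "\<exists>\<nu>. coop_step I x \<nu>"
proof -
  have "\<forall>a. \<exists>m. m \<in> Gamma I x a" using Gamma_ne[OF imdp] by blast
  then obtain \<mu> where "\<And>a. \<mu> a \<in> Gamma I x a" by metis
  then show ?thesis using coop_bind[OF imdp] by blast
qed

lemma Q_match:
  fixes I :: "'s::finite \<Rightarrow> 'a::finite \<Rightarrow> 's \<Rightarrow> real set"
  assumes imdp: "is_IMDP I"
    and bis: "forall_bisimulation I L R" and cls: "\<And>x y. cls x = cls y \<longleftrightarrow> (x,y) \<in> R"
    and coop: "\<And>\<omega>. \<omega> \<noteq> [] \<Longrightarrow> coop_step I (last \<omega>) (st \<omega>)"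
    and st: "(s,t) \<in> R"
  shows "\<exists>st'. (\<forall>h. h \<noteq> [] \<longrightarrow> coop_step I (last h) (st' h)) \<and>
     (\<forall>c. c \<noteq> [] \<longrightarrow> Q cls s st c = Q cls t st' c)"
proof -
  define D where "D c z = (\<Sum>\<omega>\<in>W cls c. PP s st \<omega> * cp cls (st \<omega>) z) / Q cls s st c" for c z
  define P where "P h \<nu> \<longleftrightarrow> coop_step I (last h) \<nu> \<and> (\<forall>z. cp cls \<nu> z = D (map cls h) z)" for h \<nu>
  define st' where "st' h = (if h \<noteq> [] \<and> Q cls s st (map cls h) > 0 then (SOME \<nu>. P h \<nu>)
      else (SOME \<nu>. coop_step I (last h) \<nu>))" for h
  have P1: "P h (st' h)" if "h \<noteq> []" "Q cls s st (map cls h) > 0" for h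
  proof -
    have "\<exists>\<nu>. P h \<nu>" unfolding P_def D_def by (rule mix_exists[OF bis cls coop that])
    then show ?thesis using that by (simp add: st'_def someI_ex)
  qed
  have co': "coop_step I (last h) (st' h)" if "h \<noteq> []" for h
  proof (cases "Q cls s st (map cls h) > 0")
    case True then show ?thesis using P1[OF that True] by (simp add: P_def)
  next
    case False then show ?thesis using coop_exists[OF imdp] by (simp add: st'_def someI_ex)
  qed
  have "Q cls s st c = Q cls t st' c" if "c \<noteq> []" for c
    using that
  proof (induction c rule: rev_induct)
    case Nil then show ?case by simp
  next
    case (snoc z c)
    show ?case
    proof (cases "c = []")
      case True
      have "cls s = cls t" using st cls by blast
      then show ?thesis using True by (simp add: Q_single)
    next
      case False
      have IH: "Q cls s st c = Q cls t st' c" using snoc.IH False by blast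
      have Qt: "Q cls t st' (c @ [z]) = (\<Sum>h\<in>W cls c. PP t st' h * cp cls (st' h) z)"
        by (rule Q_snoc[OF False])
      have Qs: "Q cls s st (c @ [z]) = (\<Sum>\<omega>\<in>W cls c. PP s st \<omega> * cp cls (st \<omega>) z)"
        by (rule Q_snoc[OF False])
      show ?thesis
      proof (cases "Q cls s st c > 0")
        case True
        have "\<forall>h\<in>W cls c. cp cls (st' h) z = D c z"
        proof
          fix h assume h: "h \<in> W cls c"
          then have "h \<noteq> []" "map cls h = c" using False by (auto simp: W_def)
          then show "cp cls (st' h) z = D c z" using P1[of h] True by (simp add: P_def)
        qed
        then have "Q cls t st' (c @ [z]) = (\<Sum>h\<in>W cls c. PP t st' h * D c z)"
          unfolding Qt by simp
        also have "\<dots> = Q cls t st' c * D c z"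
          unfolding Q_def by (simp add: sum_distrib_right)
        also have "\<dots> = Q cls s st (c @ [z])"
          using IH True unfolding Qs D_def by simp
        finally show ?thesis ..
      next
        case False
        then have q0: "Q cls s st c = 0" using Q_nonneg[of cls s st c] by simp
        then have q0': "Q cls t st' c = 0" using IH by simp
        have "\<forall>\<omega>\<in>W cls c. PP s st \<omega> = 0"
          using q0 unfolding Q_def by (subst (asm) sum_nonneg_eq_0_iff) (auto simp: PP_nonneg)
        moreover have "\<forall>\<omega>\<in>W cls c. PP t st' \<omega> = 0"
          using q0' unfolding Q_def by (subst (asm) sum_nonneg_eq_0_iff) (auto simp: PP_nonneg)
        ultimately show ?thesis unfolding Qt Qs by simp
      qed
    qed
  qed
  then show ?thesis using co' by blast
qed




lemma Pr_prob: "prob_space (Pr s \<sigma> \<pi>)"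
  for s :: "'s::finite" and \<sigma> :: "('s,'a::finite) scheduler"
  using Pr_spec[of s \<sigma> \<pi>] by (simp add: path_measure_spec_def)

lemma Pr_sets: "sets (Pr s \<sigma> \<pi>) = sets (stream_space (count_space UNIV))"
  for s :: "'s::finite" and \<sigma> :: "('s,'a::finite) scheduler"
  using Pr_spec[of s \<sigma> \<pi>] by (simp add: path_measure_spec_def)

lemma Pr_space: "space (Pr s \<sigma> \<pi>) = UNIV"
  for s :: "'s::finite" and \<sigma> :: "('s,'a::finite) scheduler"
  using sets_eq_imp_space_eq[OF Pr_sets[of s \<sigma> \<pi>]] by (simp add: space_stream_space)

lemma smap_meas: "smap cls \<in> measurable (Pr s \<sigma> \<pi>) (stream_space (count_space UNIV))"
  for s :: "'s::finite" and \<sigma> :: "('s,'a::finite) scheduler" and cls :: "'s \<Rightarrow> 's"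
  using measurable_cong_sets[OF Pr_sets[of s \<sigma> \<pi>] refl]
    measurable_smap[OF measurable_count_space[of cls UNIV]] by blast

lemma class_cyl:
  fixes s :: "'s::finite" and \<sigma> :: "('s,'a::finite) scheduler" and cls :: "'s \<Rightarrow> 's"
  assumes "c \<noteq> []"
  shows "measure (Pr s \<sigma> \<pi>) (smap cls -` Cyl c) = Q cls s (stp \<sigma> \<pi>) c"
proof -
  interpret P: prob_space "Pr s \<sigma> \<pi>" by (rule Pr_prob)
  have "smap cls -` Cyl c = (\<Union>\<omega>\<in>W cls c. Cyl \<omega>)"
    by (auto simp: Cyl_def W_def)
  moreover have "measure (Pr s \<sigma> \<pi>) (\<Union>\<omega>\<in>W cls c. Cyl \<omega>) = (\<Sum>\<omega>\<in>W cls c. measure (Pr s \<sigma> \<pi>) (Cyl \<omega>))"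
  proof (rule P.finite_measure_finite_Union)
    show "Cyl ` W cls c \<subseteq> sets (Pr s \<sigma> \<pi>)" by (auto simp: Pr_sets)
    show "disjoint_family_on Cyl (W cls c)"
      unfolding disjoint_family_on_def Cyl_def W_def by auto
  qed simp
  ultimately have "measure (Pr s \<sigma> \<pi>) (smap cls -` Cyl c) = (\<Sum>\<omega>\<in>W cls c. measure (Pr s \<sigma> \<pi>) (Cyl \<omega>))"
    by simp
  also have "\<dots> = Q cls s (stp \<sigma> \<pi>) c"
    unfolding Q_def using assms by (intro sum.cong refl Pr_Cyl) (auto simp: W_def)
  finally show ?thesis .
qed

lemma distr_eq:
  fixes s t :: "'s::finite" and \<sigma> \<sigma>' :: "('s,'a::finite) scheduler" and cls :: "'s \<Rightarrow> 's"
  assumes "\<And>c. c \<noteq> [] \<Longrightarrow> Q cls s (stp \<sigma> \<pi>) c = Q cls t (stp \<sigma>' \<pi>') c"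
  shows "distr (Pr s \<sigma> \<pi>) (stream_space (count_space UNIV)) (smap cls) =
         distr (Pr t \<sigma>' \<pi>') (stream_space (count_space UNIV)) (smap cls)"
proof (rule stream_space_eq_sstart[of UNIV])
  interpret P1: prob_space "Pr s \<sigma> \<pi>" by (rule Pr_prob)
  interpret P2: prob_space "Pr t \<sigma>' \<pi>'" by (rule Pr_prob)
  show "countable (UNIV :: 's set)" by simp
  show "AE x in distr (Pr s \<sigma> \<pi>) (stream_space (count_space UNIV)) (smap cls). x \<in> streams UNIV" by simp
  show "AE x in distr (Pr t \<sigma>' \<pi>') (stream_space (count_space UNIV)) (smap cls). x \<in> streams UNIV" by simp
  show "sets (distr (Pr s \<sigma> \<pi>) (stream_space (count_space UNIV)) (smap cls)) = sets (stream_space (count_space UNIV))" by simp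
  show "sets (distr (Pr t \<sigma>' \<pi>') (stream_space (count_space UNIV)) (smap cls)) = sets (stream_space (count_space UNIV))" by simp
  show "prob_space (distr (Pr s \<sigma> \<pi>) (stream_space (count_space UNIV)) (smap cls))"
    by (rule P1.prob_space_distr[OF smap_meas])
  show "prob_space (distr (Pr t \<sigma>' \<pi>') (stream_space (count_space UNIV)) (smap cls))"
    by (rule P2.prob_space_distr[OF smap_meas])
  fix xs :: "'s list" assume ne: "xs \<noteq> []"
  have "emeasure (distr (Pr s \<sigma> \<pi>) (stream_space (count_space UNIV)) (smap cls)) (sstart UNIV xs)
     = ennreal (Q cls s (stp \<sigma> \<pi>) xs)"
  proof -
    have "emeasure (distr (Pr s \<sigma> \<pi>) (stream_space (count_space UNIV)) (smap cls)) (sstart UNIV xs)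
       = emeasure (Pr s \<sigma> \<pi>) (smap cls -` Cyl xs \<inter> space (Pr s \<sigma> \<pi>))"
      using emeasure_distr[OF smap_meas, of "sstart UNIV xs"] by (simp add: Cyl_sstart sstart_sets)
    also have "\<dots> = ennreal (measure (Pr s \<sigma> \<pi>) (smap cls -` Cyl xs))"
      by (simp add: Pr_space P1.emeasure_eq_measure)
    finally show ?thesis by (simp add: class_cyl[OF ne])
  qed
  moreover have "emeasure (distr (Pr t \<sigma>' \<pi>') (stream_space (count_space UNIV)) (smap cls)) (sstart UNIV xs)
     = ennreal (Q cls t (stp \<sigma>' \<pi>') xs)"
  proof -
    have "emeasure (distr (Pr t \<sigma>' \<pi>') (stream_space (count_space UNIV)) (smap cls)) (sstart UNIV xs)
       = emeasure (Pr t \<sigma>' \<pi>') (smap cls -` Cyl xs \<inter> space (Pr t \<sigma>' \<pi>'))"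
      using emeasure_distr[OF smap_meas, of "sstart UNIV xs"] by (simp add: Cyl_sstart sstart_sets)
    also have "\<dots> = ennreal (measure (Pr t \<sigma>' \<pi>') (smap cls -` Cyl xs))"
      by (simp add: Pr_space P2.emeasure_eq_measure)
    finally show ?thesis by (simp add: class_cyl[OF ne])
  qed
  ultimately show "emeasure (distr (Pr s \<sigma> \<pi>) (stream_space (count_space UNIV)) (smap cls)) (sstart UNIV xs) =
    emeasure (distr (Pr t \<sigma>' \<pi>') (stream_space (count_space UNIV)) (smap cls)) (sstart UNIV xs)"
    using assms[OF ne] by simp
qed




lemma match_measure:
  fixes I :: "'s::finite \<Rightarrow> 'a::finite \<Rightarrow> 's \<Rightarrow> real set" and \<sigma> :: "('s,'a) scheduler"
  assumes imdp: "is_IMDP I"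
    and bis: "forall_bisimulation I L R" and cls: "\<And>x y. cls x = cls y \<longleftrightarrow> (x,y) \<in> R"
    and clsR: "\<And>x. (x, cls x) \<in> R"
    and st: "(s,t) \<in> R" and \<pi>: "\<pi> \<in> natures I"
  shows "\<exists>\<sigma>' :: ('s,'a) scheduler. \<exists>\<pi>'\<in>natures I. \<forall>E\<in>sets (stream_space (count_space UNIV)).
     (\<forall>w w'. (\<forall>n. (w !! n, w' !! n) \<in> R) \<longrightarrow> w \<in> E \<longrightarrow> w' \<in> E) \<longrightarrow>
     measure (Pr s \<sigma> \<pi>) E = measure (Pr t \<sigma>' \<pi>') E"
proof -
  have coop: "coop_step I (last \<omega>) (stp \<sigma> \<pi> \<omega>)" if "\<omega> \<noteq> []" for \<omega>
    unfolding stp_def by (rule coop_bind[OF imdp]) (use \<pi> that in \<open>auto simp: natures_def\<close>)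
  obtain st' where st': "\<And>h. h \<noteq> [] \<Longrightarrow> coop_step I (last h) (st' h)"
    "\<And>c. c \<noteq> [] \<Longrightarrow> Q cls s (stp \<sigma> \<pi>) c = Q cls t st' c"
    using Q_match[OF imdp bis cls coop st] by blast
  have "\<forall>h. \<exists>lm :: 'a pmf \<times> ('a \<Rightarrow> 's pmf). (h \<noteq> [] \<longrightarrow> (\<forall>a. snd lm a \<in> Gamma I (last h) a))
          \<and> st' h = bind_pmf (fst lm) (snd lm)"
  proof
    fix h :: "'s list"
    show "\<exists>lm :: 'a pmf \<times> ('a \<Rightarrow> 's pmf). (h \<noteq> [] \<longrightarrow> (\<forall>a. snd lm a \<in> Gamma I (last h) a))
          \<and> st' h = bind_pmf (fst lm) (snd lm)"
    proof (cases "h = []")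
      case True
      show ?thesis
        by (rule exI[of _ "(return_pmf undefined, \<lambda>_. st' h)"]) (simp add: True bind_return_pmf)
    next
      case False
      obtain l \<mu> where "\<forall>a. \<mu> a \<in> Gamma I (last h) a" "st' h = bind_pmf l \<mu>"
        using coop_decomp[OF imdp st'(1)[OF False]] by blast
      then show ?thesis by (intro exI[of _ "(l, \<mu>)"]) simp
    qed
  qed
  then obtain f :: "'s list \<Rightarrow> 'a pmf \<times> ('a \<Rightarrow> 's pmf)" where
    f: "\<And>h. (h \<noteq> [] \<longrightarrow> (\<forall>a. snd (f h) a \<in> Gamma I (last h) a)) \<and> st' h = bind_pmf (fst (f h)) (snd (f h))"
    by metis
  define \<sigma>' where "\<sigma>' h = fst (f h)" for h
  define \<pi>' where "\<pi>' h = snd (f h)" for h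
  have stp': "stp \<sigma>' \<pi>' = st'" using f by (auto simp: stp_def \<sigma>'_def \<pi>'_def fun_eq_iff)
  have \<pi>': "\<pi>' \<in> natures I" using f by (auto simp: natures_def \<pi>'_def)
  have deq: "distr (Pr s \<sigma> \<pi>) (stream_space (count_space UNIV)) (smap cls) =
         distr (Pr t \<sigma>' \<pi>') (stream_space (count_space UNIV)) (smap cls)"
    by (rule distr_eq) (simp add: stp' st'(2))
  have idem: "cls (cls x) = cls x" for x using clsR[of x] cls by metis
  show ?thesis
  proof (intro exI[of _ \<sigma>'] bexI[OF _ \<pi>'] ballI impI)
    fix E :: "'s stream set"
    assume E: "E \<in> sets (stream_space (count_space UNIV))"
      and clos: "\<forall>w w'. (\<forall>n. (w !! n, w' !! n) \<in> R) \<longrightarrow> w \<in> E \<longrightarrow> w' \<in> E"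
    define F where "F = smap cls -` E"
    have "w \<in> E \<longleftrightarrow> smap cls (smap cls w) \<in> E" for w
    proof
      have r1: "\<forall>n. (w !! n, smap cls (smap cls w) !! n) \<in> R" using clsR idem by simp
      show "w \<in> E \<Longrightarrow> smap cls (smap cls w) \<in> E" using clos r1 by blast
      have r2: "\<forall>n. (smap cls (smap cls w) !! n, w !! n) \<in> R" using clsR idem cls by (simp, metis)
      show "smap cls (smap cls w) \<in> E \<Longrightarrow> w \<in> E" using clos r2 by blast
    qed
    then have EF: "E = smap cls -` F" by (auto simp: F_def)
    have Fs: "F \<in> sets (stream_space (count_space UNIV))"
      using measurable_sets[OF measurable_smap[OF measurable_count_space[of cls UNIV]] E]
      by (simp add: F_def space_stream_space)
    have "measure (Pr s \<sigma> \<pi>) E = measure (distr (Pr s \<sigma> \<pi>) (stream_space (count_space UNIV)) (smap cls)) F"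
      by (simp add: measure_distr[OF smap_meas Fs] EF Pr_space)
    also have "\<dots> = measure (distr (Pr t \<sigma>' \<pi>') (stream_space (count_space UNIV)) (smap cls)) F"
      by (simp add: deq)
    also have "\<dots> = measure (Pr t \<sigma>' \<pi>') E"
      by (simp add: measure_distr[OF smap_meas Fs] EF Pr_space)
    finally show "measure (Pr s \<sigma> \<pi>) E = measure (Pr t \<sigma>' \<pi>') E" .
  qed
qed




lemma pred_snth: "Measurable.pred (stream_space (count_space UNIV)) (\<lambda>w. P (w !! j))"
  by (rule measurable_compose[OF measurable_snth measurable_count_space])

lemma sat_path_sets:
  fixes I :: "'s::finite \<Rightarrow> 'a::finite \<Rightarrow> 's \<Rightarrow> real set"
  shows "{w. sat_path I L w \<psi>} \<in> sets (stream_space (count_space UNIV))"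
proof -
  have "Measurable.pred (stream_space (count_space UNIV)) (\<lambda>w. sat_path I L w \<psi>)"
  proof (cases \<psi>)
    case (Next f) then show ?thesis by (simp add: pred_snth)
  next
    case (Until f g) show ?thesis
      unfolding Until sat_path.simps
      apply (rule pred_intros_countable(2))
      apply (rule pred_intros_logic(3))
       apply (rule pred_snth)
      apply (rule pred_intros_countable(1))
      apply (rule pred_intros_imp')
      apply (rule pred_snth)
      done
  next
    case (BUntil f k g) show ?thesis
      unfolding BUntil sat_path.simps
      apply (rule pred_intros_countable(2))
      apply (rule pred_intros_conj1')
      apply (rule pred_intros_logic(3))
       apply (rule pred_snth)
      apply (rule pred_intros_countable(1))
      apply (rule pred_intros_imp')
      apply (rule pred_snth)
      done
  qed
  then show ?thesis by (simp add: Measurable.pred_def space_stream_space)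
qed

lemma sat_bisim:
  fixes I :: "'s::finite \<Rightarrow> 'a::finite \<Rightarrow> 's \<Rightarrow> real set"
  assumes imdp: "is_IMDP I"
    and bis: "forall_bisimulation I L R" and cls: "\<And>x y. cls x = cls y \<longleftrightarrow> (x,y) \<in> R"
    and clsR: "\<And>x. (x, cls x) \<in> R"
  shows "(\<forall>x y. (x,y) \<in> R \<longrightarrow> (sat_state I L x \<phi> \<longleftrightarrow> sat_state I L y \<phi>))"
    "(\<forall>w w'. (\<forall>n. (w !! n, w' !! n) \<in> R) \<longrightarrow> (sat_path I L w \<psi> \<longleftrightarrow> sat_path I L w' \<psi>))"
proof (induct \<phi> and \<psi>)
  case (Prob c p \<psi>)
  have sym: "(y,x) \<in> R" if "(x,y) \<in> R" for x y using cls[of x y] cls[of y x] that by simp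
  have clos: "\<forall>w w'. (\<forall>n. (w !! n, w' !! n) \<in> R) \<longrightarrow> w \<in> {w. sat_path I L w \<psi>} \<longrightarrow> w' \<in> {w. sat_path I L w \<psi>}"
    using Prob by blast
  have one: "sat_state I L y (Prob c p \<psi>)" if xy: "(x,y) \<in> R" and sx: "sat_state I L x (Prob c p \<psi>)" for x y
  proof -
    have "cmp_holds c (measure (Pr y \<sigma>' \<pi>') {w. sat_path I L w \<psi>}) (of_rat p)"
      if \<pi>': "\<pi>' \<in> natures I" for \<sigma>' :: "('s,'a) scheduler" and \<pi>'
    proof -
      obtain \<sigma> :: "('s,'a) scheduler" and \<pi> where \<pi>: "\<pi> \<in> natures I" and
        eq: "\<forall>E\<in>sets (stream_space (count_space UNIV)).
          (\<forall>w w'. (\<forall>n. (w !! n, w' !! n) \<in> R) \<longrightarrow> w \<in> E \<longrightarrow> w' \<in> E) \<longrightarrow>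
          measure (Pr y \<sigma>' \<pi>') E = measure (Pr x \<sigma> \<pi>) E"
        using match_measure[OF imdp bis cls clsR sym[OF xy] \<pi>'] by blast
      have "measure (Pr y \<sigma>' \<pi>') {w. sat_path I L w \<psi>} = measure (Pr x \<sigma> \<pi>) {w. sat_path I L w \<psi>}"
        using eq sat_path_sets[of I L \<psi>] clos by blast
      moreover have "cmp_holds c (measure (Pr x \<sigma> \<pi>) {w. sat_path I L w \<psi>}) (of_rat p)"
        using sx \<pi> by simp
      ultimately show ?thesis by simp
    qed
    then show ?thesis by simp
  qed
  show ?case
  proof (intro allI impI)
    fix x y assume "(x, y) \<in> R"
    then show "sat_state I L x (Prob c p \<psi>) = sat_state I L y (Prob c p \<psi>)"
      using one sym by blast
  qed
next
  case TT show ?case by simp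
next
  case (Atom a)
  have "L x = L y" if "(x,y) \<in> R" for x y
    using bis that unfolding forall_bisimulation_def by blast
  then show ?case by simp
next
  case (Neg f) then show ?case by simp
next
  case (And f g) then show ?case by simp
next
  case (Next f)
  show ?case
  proof (intro allI impI)
    fix w w' :: "'s stream" assume r: "\<forall>n. (w !! n, w' !! n) \<in> R"
    have "sat_state I L (w !! 1) f = sat_state I L (w' !! 1) f" using Next r by blast
    then show "sat_path I L w (Next f) = sat_path I L w' (Next f)" by (simp only: sat_path.simps)
  qed
next
  case (Until f g)
  show ?case
  proof (intro allI impI)
    fix w w' :: "'s stream" assume r: "\<forall>n. (w !! n, w' !! n) \<in> R"
    have "\<And>n. sat_state I L (w !! n) f = sat_state I L (w' !! n) f"
         "\<And>n. sat_state I L (w !! n) g = sat_state I L (w' !! n) g" using Until r by blast+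
    then show "sat_path I L w (Until f g) = sat_path I L w' (Until f g)" by (simp only: sat_path.simps)
  qed
next
  case (BUntil f k g)
  show ?case
  proof (intro allI impI)
    fix w w' :: "'s stream" assume r: "\<forall>n. (w !! n, w' !! n) \<in> R"
    have "\<And>n. sat_state I L (w !! n) f = sat_state I L (w' !! n) f"
         "\<And>n. sat_state I L (w !! n) g = sat_state I L (w' !! n) g" using BUntil r by blast+
    then show "sat_path I L w (BUntil f k g) = sat_path I L w' (BUntil f k g)" by (simp only: sat_path.simps)
  qed
qed




theorem theorem1:
  fixes I :: "'s::finite \<Rightarrow> 'a::finite \<Rightarrow> 's \<Rightarrow> real set"
    and L :: "'s \<Rightarrow> 'ap set"
    and s t :: 's
    and \<phi> :: "'ap state_formula"
  assumes "is_IMDP I"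
    and "forall_bisimilar I L s t"
    and "wf_state \<phi>"
  shows "sat_state I L s \<phi> \<longleftrightarrow> sat_state I L t \<phi>"
proof -
  obtain R where bis: "forall_bisimulation I L R" and st: "(s,t) \<in> R"
    using assms(2) unfolding forall_bisimilar_def by blast
  have eqv: "equiv UNIV R" using bis unfolding forall_bisimulation_def by blast
  have refl: "(x,x) \<in> R" for x using eqv by (simp add: equiv_def refl_on_def)
  have sym: "(y,x) \<in> R" if "(x,y) \<in> R" for x y using eqv that by (meson equiv_def symD)
  have trans: "(x,z) \<in> R" if "(x,y) \<in> R" "(y,z) \<in> R" for x y z using eqv that by (meson equiv_def transD)
  define cls where "cls x = (SOME y. (x,y) \<in> R)" for x
  have clsR: "(x, cls x) \<in> R" for x unfolding cls_def by (rule someI[of _ x]) (rule refl)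
  have clsiff: "cls x = cls y \<longleftrightarrow> (x,y) \<in> R" for x y
  proof
    assume "cls x = cls y"
    then show "(x,y) \<in> R" using clsR[of x] clsR[of y] sym trans by metis
  next
    assume xy: "(x,y) \<in> R"
    have "(\<lambda>z. (x,z) \<in> R) = (\<lambda>z. (y,z) \<in> R)"
      using xy sym trans by (intro ext iffI) blast+
    then show "cls x = cls y" unfolding cls_def by simp
  qed
  show ?thesis
    using sat_bisim(1)[OF assms(1) bis clsiff clsR] st by blast
qed


end
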